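(* Let $|q|<1$ and let $(\alpha_n,\beta_n)$ be a Bailey pair with respect to $a$, with $|qa|<1$, no denominator vanishing, and all series converging absolutely. Then $$\sum_{n=1}^{\infty} (q^2;q^2)_{n-1}(-q a)^{n} \beta_n - \sum_{n=1}^{\infty}\frac{(q^2;q^2)_{n-1}(-q a)^{n}}{(q^2 a^2 ;q^2)_n}\alpha_n=f_3(a,q),$$ where $f_3(a,q)$ is given by each of the following (equal) expressions: $$f_3(a,q)=-\sum_{n=1}^{\infty} \frac{(q\sqrt{a},-q\sqrt{a},a;q)_{n}(-q;q)_{n-1}q^{n(n+1)/2}a^{n}}{(\sqrt{a},-\sqrt{a};q)_{n}(q^2 a^2;q^2)_{n}(1-q^n)} =\sum_{n=1}^{\infty} \frac{(-q;q)_{n-1}(-q a)^{n}}{(q a;q)_{n}(1-q^n)} =-\sum_{n=1}^{\infty}\frac{a q^n}{1-a^2q^{2n}}.$$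
   Context: Notation: $(x;q)_n=(1-x)(1-xq)\cdots(1-xq^{n-1})$, $(x;q)_0=1$, $(x_1,\dots,x_m;q)_n=(x_1;q)_n\cdots(x_m;q)_n$. A Bailey pair with respect to $a$ (base $q$) is a pair of sequences $(\alpha_n,\beta_n)_{n\ge0}$ with $\alpha_0=\beta_0=1$ and, for $n>0$, $\beta_n=\sum_{j=0}^{n}\frac{\alpha_j}{(q;q)_{n-j}(aq;q)_{n+j}}$. *)

theory Defs
  imports Complex_Main
begin

definition qpoch :: "complex \<Rightarrow> complex \<Rightarrow> nat \<Rightarrow> complex" where
  "qpoch x q n = (\<Prod>k<n. 1 - x * q ^ k)"

definition bailey_pair :: "complex \<Rightarrow> complex \<Rightarrow> (nat \<Rightarrow> complex) \<Rightarrow> (nat \<Rightarrow> complex) \<Rightarrow> bool" where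
  "bailey_pair a q \<alpha> \<beta> \<longleftrightarrow> \<alpha> 0 = 1 \<and> \<beta> 0 = 1 \<and>
     (\<forall>n>0. \<beta> n = (\<Sum>j\<le>n. \<alpha> j / (qpoch q q (n - j) * qpoch (a * q) q (n + j))))"

end

theory Submission
  imports Defs
begin


lemma qpoch_0[simp]: "qpoch b q 0 = 1" by (simp add: qpoch_def)
lemma qpoch_Suc: "qpoch b q (Suc n) = qpoch b q n * (1 - b * q ^ n)"
  by (simp add: qpoch_def)
lemma qpoch_add: "qpoch b q (m + n) = qpoch b q m * qpoch (b * q ^ m) q n"
  by (induction n) (simp_all add: qpoch_Suc algebra_simps power_add)
lemma qpoch_shift: "qpoch b q (Suc n) = (1 - b) * qpoch (b * q) q n"
  using qpoch_add[of b q 1 n] by (simp add: qpoch_Suc)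
lemma qpoch_sq: "qpoch (q^2) (q^2) n = qpoch q q n * qpoch (- q) q n"
proof (induction n)
  case 0 then show ?case by simp
next
  case (Suc n)
  have e: "(q^2)^n = (q^n)^2" by (metis power_mult mult.commute)
  have "qpoch (q^2) (q^2) (Suc n) = qpoch q q n * qpoch (- q) q n * (1 - q^2 * (q^n)^2)"
    by (simp add: qpoch_Suc Suc e)
  also have "\<dots> = qpoch q q n * (1 - q * q^n) * (qpoch (- q) q n * (1 - (-q) * q^n))"
    by (simp add: power2_eq_square algebra_simps)
  finally show ?case by (simp add: qpoch_Suc)
qed

lemma qpoch_norm_upper:
  assumes "norm q < 1"
  shows "norm (qpoch b q n) \<le> exp (norm b / (1 - norm q))"
proof -
  have "norm (qpoch b q n) = (\<Prod>k<n. norm (1 - b * q ^ k))"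
    by (simp add: qpoch_def prod_norm)
  also have "\<dots> \<le> (\<Prod>k<n. exp (norm b * norm q ^ k))"
  proof (rule prod_mono, safe)
    fix k
    have "norm (1 - b * q ^ k) \<le> 1 + norm b * norm q ^ k"
      by (metis norm_mult norm_one norm_power norm_triangle_ineq4)
    also have "\<dots> \<le> exp (norm b * norm q ^ k)" by (rule exp_ge_add_one_self[simplified add.commute])
    finally show "norm (1 - b * q ^ k) \<le> exp (norm b * norm q ^ k)" .
  qed simp
  also have "\<dots> = exp (norm b * (\<Sum>k<n. norm q ^ k))"
    by (simp add: exp_sum sum_distrib_left)
  also have "\<dots> \<le> exp (norm b / (1 - norm q))"
  proof -
    have "(\<Sum>k<n. norm q ^ k) = (1 - norm q ^ n) / (1 - norm q)"
      using assms by (simp add: sum_gp_strict)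
    also have "\<dots> \<le> 1 / (1 - norm q)" using assms
      by (simp add: divide_right_mono)
    finally have "norm b * (\<Sum>k<n. norm q ^ k) \<le> norm b * (1 / (1 - norm q))"
      by (rule mult_left_mono) simp
    then have "norm b * (\<Sum>k<n. norm q ^ k) \<le> norm b / (1 - norm q)" by simp
    then show ?thesis by simp
  qed
  finally show ?thesis .
qed

lemma prod_one_minus_ge:
  fixes t :: "nat \<Rightarrow> real"
  assumes "\<And>k. 0 \<le> t k" "\<And>k. t k \<le> 1"
  shows "1 - (\<Sum>k<n. t k) \<le> (\<Prod>k<n. 1 - t k) \<and> (\<Prod>k<n. 1 - t k) \<le> 1 \<and> 0 \<le> (\<Prod>k<n. 1 - t k)"
proof (induction n)
  case 0 then show ?case by simp
next
  case (Suc n)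
  let ?P = "\<Prod>k<n. 1 - t k"
  have h: "0 \<le> 1 - t n" "1 - t n \<le> 1" using assms[of n] by auto
  have "?P * t n \<le> t n" using Suc assms(1)[of n] by (simp add: mult_left_le_one_le)
  then have "?P * (1 - t n) \<ge> ?P - t n" by (simp add: algebra_simps)
  moreover have "?P * (1 - t n) \<le> 1" using Suc h by (simp add: mult_le_one)
  moreover have "?P * (1 - t n) \<ge> 0" using Suc h by simp
  ultimately show ?case using Suc by simp
qed

lemma qpoch_norm_lower_small:
  assumes "norm q < 1" "norm b / (1 - norm q) \<le> 1/2"
  shows "norm (qpoch b q n) \<ge> 1/2"
proof -
  have "norm b \<le> 1/2 * (1 - norm q)" using assms by (simp add: divide_le_eq)
  moreover have "1/2 * (1 - norm q) \<le> 1/2" by simp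
  ultimately have nb: "norm b \<le> 1/2" by linarith
  have e1: "norm (qpoch b q n) = (\<Prod>k<n. norm (1 - b * q ^ k))"
    by (simp add: qpoch_def prod_norm)
  have e2: "(\<Prod>k<n. norm (1 - b * q ^ k)) \<ge> (\<Prod>k<n. 1 - norm b * norm q ^ k)"
  proof (rule prod_mono, safe)
    fix k
    have qk: "norm q ^ k \<le> 1" using assms(1) by (simp add: power_le_one)
    have "norm b * norm q ^ k \<le> norm b" using qk by (simp add: mult_left_le)
    then have "norm b * norm q ^ k \<le> 1/2" using nb by linarith
    then show "0 \<le> 1 - norm b * norm q ^ k" by simp
    show "1 - norm b * norm q ^ k \<le> norm (1 - b * q ^ k)"
      by (metis norm_mult norm_one norm_power norm_triangle_ineq2)
  qed
  have e3: "(\<Prod>k<n. 1 - norm b * norm q ^ k) \<ge> 1 - (\<Sum>k<n. norm b * norm q ^ k)"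
  proof -
    have "\<And>k. norm b * norm q ^ k \<le> 1"
    proof -
      fix k
      have qk: "norm q ^ k \<le> 1" using assms(1) by (simp add: power_le_one)
      have "norm b * norm q ^ k \<le> norm b" using qk by (simp add: mult_left_le)
      then show "norm b * norm q ^ k \<le> 1" using nb by linarith
    qed
    then show ?thesis using prod_one_minus_ge[of "\<lambda>k. norm b * norm q ^ k" n] by simp
  qed
  have e4: "(\<Sum>k<n. norm b * norm q ^ k) \<le> 1/2"
  proof -
    have "(\<Sum>k<n. norm q ^ k) = (1 - norm q ^ n) / (1 - norm q)"
      using assms by (simp add: sum_gp_strict)
    also have "\<dots> \<le> 1 / (1 - norm q)" using assms
      by (simp add: divide_right_mono)
    finally have "norm b * (\<Sum>k<n. norm q ^ k) \<le> norm b * (1 / (1 - norm q))"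
      by (rule mult_left_mono) simp
    then have "(\<Sum>k<n. norm b * norm q ^ k) \<le> norm b / (1 - norm q)"
      by (simp add: sum_distrib_left[symmetric])
    then show ?thesis using assms(2) by linarith
  qed
  show ?thesis using e1 e2 e3 e4 by linarith
qed

lemma aux_div: "(c::real) \<noteq> 0 \<Longrightarrow> c * (x / (2 * c)) = x / 2"
  by (simp add: field_simps)

lemma aux_div2: "0 < (d::real) \<Longrightarrow> x \<le> d / 2 \<Longrightarrow> x / d \<le> 1/2"
  by (simp add: field_simps)

lemma qpoch_norm_lower:
  assumes q: "norm q < 1" and nz: "\<And>n. qpoch b q n \<noteq> 0"
  shows "\<exists>c>0. \<forall>n. c \<le> norm (qpoch b q n)"
proof -
  have d0: "0 < norm b + 1" by (simp add: add_nonneg_pos)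
  have d: "0 < 2 * (norm b + 1)" using d0 by simp
  have pos: "0 < (1 - norm q) / (2 * (norm b + 1))" using q d by (intro divide_pos_pos) auto
  obtain K where K: "norm q ^ K < (1 - norm q) / (2 * (norm b + 1))"
    using real_arch_pow_inv[OF pos q] by blast
  have "norm b * norm q ^ K \<le> (norm b + 1) * norm q ^ K" by (simp add: mult_right_mono)
  also have "\<dots> \<le> (norm b + 1) * ((1 - norm q) / (2 * (norm b + 1)))"
    using K by (intro mult_left_mono) auto
  also have "\<dots> = (1 - norm q) / 2" using d0 by (intro aux_div) simp
  finally have "norm b * norm q ^ K \<le> (1 - norm q) / 2" .
  moreover have "norm (b * q ^ K) = norm b * norm q ^ K" by (simp add: norm_mult norm_power)
  moreover have "0 < 1 - norm q" using q by simp
  ultimately have small: "norm (b * q ^ K) / (1 - norm q) \<le> 1/2"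
    using aux_div2[of "1 - norm q" "norm (b * q ^ K)"] by simp
  define m where "m = Min ((\<lambda>n. norm (qpoch b q n)) ` {..K})"
  have mpos: "m > 0" unfolding m_def
  proof (subst Min_gr_iff)
    show "finite ((\<lambda>n. norm (qpoch b q n)) ` {..K})" by simp
    show "(\<lambda>n. norm (qpoch b q n)) ` {..K} \<noteq> {}" by simp
    show "\<forall>x\<in>(\<lambda>n. norm (qpoch b q n)) ` {..K}. 0 < x" using nz by simp
  qed
  have mle: "m \<le> norm (qpoch b q n)" if "n \<le> K" for n
    unfolding m_def using that by (intro Min_le) auto
  show ?thesis
  proof (intro exI[of _ "m/2"] conjI allI)
    show "0 < m/2" using mpos by simp
    fix n
    show "m/2 \<le> norm (qpoch b q n)"
    proof (cases "n \<le> K")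
      case True then show ?thesis using mle[of n] mpos by simp
    next
      case False
      define r where "r = n - K"
      have n: "n = K + r" using False unfolding r_def by simp
      have "norm (qpoch b q n) = norm (qpoch b q K) * norm (qpoch (b * q ^ K) q r)"
        unfolding n qpoch_add norm_mult by (rule refl)
      moreover have "norm (qpoch (b * q ^ K) q r) \<ge> 1/2"
        by (rule qpoch_norm_lower_small[OF q small])
      moreover have "m \<le> norm (qpoch b q K)" using mle by simp
      ultimately have "m * (1/2) \<le> norm (qpoch b q n)"
        using mult_mono[of m "norm (qpoch b q K)" "1/2" "norm (qpoch (b * q ^ K) q r)"] by simp
      then show ?thesis by simp
    qed
  qed
qed



lemma wz_alg0:
  fixes a q Q S P u1 u2 :: complex
  assumes "P \<noteq> 0" "u1 \<noteq> 0" "u2 \<noteq> 0" and d: "u1 = 1 - a*q*Q" "u2 = 1 - a*q*q*Q"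
  shows "S*(1 - a^2*q^2*Q)/(P*u1*u2) - S/P
       = -Q*((1-q*a)+(1-a*q*Q)*q)*(-q*a)*S/(P*u1*u2)"
proof -
  have h: "P * inverse P = 1" "u1 * inverse u1 = 1" "u2 * inverse u2 = 1" using assms by auto
  show ?thesis unfolding divide_inverse inverse_mult_distrib using h d by algebra
qed

lemma wz_alg1:
  fixes a q Q y Z Pq V S X u0 u1 u2 u3 :: complex
  assumes "Pq \<noteq> 0" "V \<noteq> 0" "u0 \<noteq> 0" "u1 \<noteq> 0" "u2 \<noteq> 0" "u3 \<noteq> 0"
   and d: "u0 = 1 - q*y" "u1 = 1 - a*q*Q*y" "u2 = 1 - a*q*q*Q*y" "u3 = 1 - a*q*q*q*Q*y"
  shows "Z*(1-Q*q^2*y^2)*X*S*(1-a^2*q^2*Q)/(Pq*u0*(V*u1*u2*u3))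
     - (1-Q)*Z*X*S/(Pq*u0*(V*u1))
   = (-Q*((1-q*a)+(1-a*q*Q)*(q*q*y))*(Z*(1-Q*q^2*y^2))*((-q*a)*X)*S/(Pq*u0*(V*u1*u2*u3)))
     - (-Q*((1-q*a)+(1-a*q*Q)*(q*y))*Z*X*S/(Pq*(V*u1*u2)))"
proof -
  have h: "Pq * inverse Pq = 1" "V * inverse V = 1" "u0 * inverse u0 = 1" "u1 * inverse u1 = 1"
     "u2 * inverse u2 = 1" "u3 * inverse u3 = 1" using assms by auto
  show ?thesis unfolding divide_inverse inverse_mult_distrib using h d by algebra
qed



definition fW :: "complex \<Rightarrow> complex \<Rightarrow> nat \<Rightarrow> nat \<Rightarrow> complex" where
  "fW a q j m = qpoch (q^(2*j)) (q^2) m * (-q*a)^m * qpoch (q^2*a^2) (q^2) j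
      / (qpoch q q m * qpoch (a*q) q (2*j+m))"

definition gW :: "complex \<Rightarrow> complex \<Rightarrow> nat \<Rightarrow> nat \<Rightarrow> complex" where
  "gW a q j m = (case m of 0 \<Rightarrow> 0 | Suc k \<Rightarrow>
      -(q^(2*j)) * ((1 - q*a) + (1 - a*q*q^(2*j)) * q^(Suc k)) * qpoch (q^(2*j)*q^2) (q^2) k
        * (-q*a)^(Suc k) * qpoch (q^2*a^2) (q^2) j / (qpoch q q k * qpoch (a*q) q (2*j+k+2)))"

lemma qpoch_nz_factor: "qpoch b q (Suc n) \<noteq> 0 \<Longrightarrow> 1 - b * q ^ n \<noteq> 0"
  by (simp add: qpoch_Suc)

lemma qpoch_Suc2: "qpoch b q (Suc (Suc n)) = qpoch b q n * (1 - b*q^n) * (1 - b*q*q^n)"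
  by (simp add: qpoch_Suc algebra_simps)
lemma qpoch_Suc3: "qpoch b q (Suc (Suc (Suc n))) = qpoch b q n * (1 - b*q^n) * (1 - b*q*q^n) * (1 - b*q*q*q^n)"
  by (simp add: qpoch_Suc algebra_simps)

lemma wz:
  assumes nzq: "\<And>n. qpoch q q n \<noteq> 0" and nza: "\<And>n. qpoch (a*q) q n \<noteq> 0"
  shows "fW a q (Suc j) m - fW a q j m = gW a q j (Suc m) - gW a q j m"
proof (cases m)
  case 0
  define Q where "Q = q^(2*j)"
  define S where "S = qpoch (q^2*a^2) (q^2) j"
  define P where "P = qpoch (a*q) q (2*j)"
  have e1: "qpoch (q^2*a^2) (q^2) (Suc j) = S * (1 - a^2*q^2*Q)"
    by (simp add: qpoch_Suc S_def Q_def power_mult algebra_simps power2_eq_square)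
  have e2: "qpoch (a*q) q (2 * Suc j) = P * (1 - a*q*Q) * (1 - a*q*q*Q)"
    by (simp add: qpoch_Suc P_def Q_def algebra_simps)
  have e3: "qpoch (a*q) q (2*j+0+2) = P * (1 - a*q*Q) * (1 - a*q*q*Q)"
    by (simp add: qpoch_Suc P_def Q_def algebra_simps numeral_2_eq_2)
  have nz: "P \<noteq> 0" "1 - a*q*Q \<noteq> 0" "1 - a*q*q*Q \<noteq> 0"
    using nza[of "2*j"] qpoch_nz_factor[OF nza[of "Suc (2*j)"]] qpoch_nz_factor[OF nza[of "Suc (Suc (2*j))"]]
    by (simp_all add: P_def Q_def algebra_simps)
  have "fW a q (Suc j) 0 - fW a q j 0 = S*(1 - a^2*q^2*Q)/(P*(1 - a*q*Q)*(1 - a*q*q*Q)) - S/P"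
    unfolding fW_def using e1 e2 by (simp add: S_def P_def)
  also have "\<dots> = -Q*((1-q*a)+(1-a*q*Q)*q)*(-q*a)*S/(P*(1 - a*q*Q)*(1 - a*q*q*Q))"
    using wz_alg0[OF nz refl refl] .
  also have "\<dots> = gW a q j (Suc 0) - gW a q j 0"
    unfolding gW_def using e3 by (simp add: S_def Q_def)
  finally show ?thesis using 0 by simp
next
  case (Suc k)
  define Q where "Q = q^(2*j)"
  define S where "S = qpoch (q^2*a^2) (q^2) j"
  define V where "V = qpoch (a*q) q (2*j+k)"
  define Z where "Z = qpoch (Q*q^2) (q^2) k"
  define Pq where "Pq = qpoch q q k"
  define y where "y = q^k"
  define X where "X = (-q*a)^(Suc k)"
  have Qs: "q^(2 * Suc j) = Q*q^2" by (simp add: Q_def power_add[symmetric])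
  have qk2: "(q^2)^k = y^2" by (simp add: y_def power_mult[symmetric] mult.commute)
  have qjk: "q^(2*j+k) = Q*y" by (simp add: Q_def y_def power_add)
  have e1: "qpoch (q^2*a^2) (q^2) (Suc j) = S * (1 - a^2*q^2*Q)"
    by (simp add: qpoch_Suc S_def Q_def power_mult algebra_simps power2_eq_square)
  have e2: "qpoch (Q*q^2) (q^2) (Suc k) = Z * (1 - Q*q^2*y^2)"
    by (simp add: qpoch_Suc Z_def qk2 algebra_simps)
  have e3: "qpoch Q (q^2) (Suc k) = (1 - Q) * Z"
    by (simp add: qpoch_shift Z_def)
  have e4: "qpoch q q (Suc k) = Pq * (1 - q*y)"
    by (simp add: qpoch_Suc Pq_def y_def)
  have e5: "qpoch (a*q) q (2*j + Suc k) = V * (1 - a*q*Q*y)"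
  proof -
    have "qpoch (a*q) q (2*j + Suc k) = qpoch (a*q) q (2*j+k) * (1 - a*q*q^(2*j+k))"
      by (simp only: add_Suc_right qpoch_Suc)
    also have "\<dots> = V * (1 - a*q*Q*y)" unfolding qjk V_def by (simp add: algebra_simps)
    finally show ?thesis .
  qed
  have e6: "qpoch (a*q) q (2*j+k+2) = V * (1 - a*q*Q*y) * (1 - a*q*q*Q*y)"
  proof -
    have eq: "2*j+k+2 = Suc (Suc (2*j+k))" by simp
    show ?thesis unfolding eq qpoch_Suc2 qjk V_def by (simp add: algebra_simps)
  qed
  have e7: "qpoch (a*q) q (2*j + Suc k + 2) = V * (1 - a*q*Q*y) * (1 - a*q*q*Q*y) * (1 - a*q*q*q*Q*y)"
  proof -
    have eq: "2*j + Suc k + 2 = Suc (Suc (Suc (2*j+k)))" by simp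
    show ?thesis unfolding eq qpoch_Suc3 qjk V_def by (simp add: algebra_simps)
  qed
  have e8: "qpoch (a*q) q (2 * Suc j + Suc k) = V * (1 - a*q*Q*y) * (1 - a*q*q*Q*y) * (1 - a*q*q*q*Q*y)"
    using e7 by (simp add: algebra_simps)
  have nzq1: "1 - q*y \<noteq> 0" using qpoch_nz_factor[OF nzq[of "Suc k"]] by (simp add: y_def)
  have nz: "Pq \<noteq> 0" "V \<noteq> 0" "1 - a*q*Q*y \<noteq> 0" "1 - a*q*q*Q*y \<noteq> 0" "1 - a*q*q*q*Q*y \<noteq> 0"
    using nzq[of k] nza[of "2*j+k"] e7 nza[of "2*j + Suc k + 2"] by (auto simp: Pq_def V_def)
  have L: "fW a q (Suc j) m - fW a q j m =
      Z*(1-Q*q^2*y^2)*X*S*(1-a^2*q^2*Q)/(Pq*(1-q*y)*(V*(1-a*q*Q*y)*(1-a*q*q*Q*y)*(1-a*q*q*q*Q*y)))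
     - (1-Q)*Z*X*S/(Pq*(1-q*y)*(V*(1-a*q*Q*y)))"
    unfolding fW_def Suc Qs Q_def[symmetric] e1 e2 e3 e4 e5 e8 X_def[symmetric] S_def[symmetric]
    by (simp only: mult.assoc)
  have R: "gW a q j (Suc m) - gW a q j m =
     (-Q*((1-q*a)+(1-a*q*Q)*(q*q*y))*(Z*(1-Q*q^2*y^2))*((-q*a)*X)*S/(Pq*(1-q*y)*(V*(1-a*q*Q*y)*(1-a*q*q*Q*y)*(1-a*q*q*q*Q*y))))
     - (-Q*((1-q*a)+(1-a*q*Q)*(q*y))*Z*X*S/(Pq*(V*(1-a*q*Q*y)*(1-a*q*q*Q*y))))"
    unfolding gW_def Suc nat.case Q_def[symmetric] Z_def[symmetric] e2 e4 e6 e7 X_def[symmetric] S_def[symmetric] Pq_def[symmetric]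
    by (simp add: X_def y_def mult.assoc)
  show ?thesis unfolding L R
    by (rule wz_alg1[OF nz(1,2) nzq1 nz(3,4,5) refl refl refl refl])
qed



definition Sf :: "complex \<Rightarrow> complex \<Rightarrow> nat \<Rightarrow> nat \<Rightarrow> complex" where
  "Sf a q j M = (\<Sum>m<M. fW a q j m)"

lemma qpoch_qq_nz: assumes "norm q < 1" shows "qpoch q q n \<noteq> 0"
proof -
  have "1 - q * q ^ k \<noteq> 0" for k
  proof
    assume "1 - q * q ^ k = 0"
    then have "q ^ Suc k = 1" by simp
    then have "norm q ^ Suc k = 1" by (metis norm_one norm_power)
    moreover have "norm q ^ Suc k < 1"
    proof -
      have "norm q ^ k \<le> 1" using assms by (simp add: power_le_one)
      then have "norm q * norm q ^ k \<le> norm q" by (simp add: mult_left_le)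
      then show ?thesis using assms by simp
    qed
    ultimately show False by simp
  qed
  then show ?thesis by (simp add: qpoch_def)
qed

lemma fW_0: "fW a q 0 0 = 1" "fW a q 0 (Suc k) = 0"
  by (simp_all add: fW_def qpoch_shift)

lemma Sf_0: "Sf a q 0 (Suc M) = 1"
  by (induction M) (simp_all add: Sf_def fW_0)

lemma Sf_step:
  assumes "\<And>n. qpoch q q n \<noteq> 0" "\<And>n. qpoch (a*q) q n \<noteq> 0"
  shows "Sf a q (Suc j) M = Sf a q j M + gW a q j M"
proof (induction M)
  case 0 then show ?case by (simp add: Sf_def gW_def)
next
  case (Suc M)
  have "fW a q (Suc j) M = fW a q j M + gW a q j (Suc M) - gW a q j M"
    using wz[OF assms, of j M] by (simp add: algebra_simps)
  then show ?case using Suc by (simp add: Sf_def algebra_simps)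
qed

lemma Sf_eq:
  assumes "\<And>n. qpoch q q n \<noteq> 0" "\<And>n. qpoch (a*q) q n \<noteq> 0"
  shows "Sf a q j (Suc M) = 1 + (\<Sum>i<j. gW a q i (Suc M))"
  by (induction j) (simp_all add: Sf_0 Sf_step[OF assms] algebra_simps)

lemma gW_bound:
  assumes q: "norm q < 1" and qa: "norm (q*a) < 1" and nza: "\<And>n. qpoch (a*q) q n \<noteq> 0"
  shows "\<exists>K. \<forall>i k. norm (gW a q i (Suc k)) \<le> K * (norm q ^ 2) ^ i * norm (q*a) ^ Suc k"
proof -
  obtain c1 where c1: "c1 > 0" "\<And>n. c1 \<le> norm (qpoch q q n)"
    using qpoch_norm_lower[OF q qpoch_qq_nz[OF q]] by blast
  obtain c2 where c2: "c2 > 0" "\<And>n. c2 \<le> norm (qpoch (a*q) q n)"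
    using qpoch_norm_lower[OF q nza] by blast
  have q2: "norm (q^2) < 1" using q by (simp add: norm_power power_less_one_iff)
  define E1 where "E1 = exp (1 / (1 - norm (q^2)))"
  define E2 where "E2 = exp (norm (q^2*a^2) / (1 - norm (q^2)))"
  have E1: "norm (qpoch (q^(2*i)*q^2) (q^2) k) \<le> E1" for i k
  proof -
    have "norm (q^(2*i)*q^2) \<le> 1" using q
      by (simp add: norm_mult norm_power power_le_one mult_le_one)
    then have "norm (q^(2*i)*q^2) / (1 - norm (q^2)) \<le> 1 / (1 - norm (q^2))"
      using q2 by (simp add: divide_right_mono)
    then show ?thesis unfolding E1_def using qpoch_norm_upper[OF q2, of "q^(2*i)*q^2" k]
      by (meson exp_le_cancel_iff order_trans)
  qed
  have E2: "norm (qpoch (q^2*a^2) (q^2) i) \<le> E2" for i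
    unfolding E2_def using qpoch_norm_upper[OF q2] by blast
  have br: "norm ((1 - q*a) + (1 - a*q*q^(2*i)) * q^(Suc k)) \<le> 4" for i k
  proof -
    have n1: "norm (1 - q*a) \<le> 2" using qa
      by (smt (verit) norm_one norm_triangle_ineq4)
    have "norm (a*q*q^(2*i)) \<le> 1"
    proof -
      have "norm (a*q*q^(2*i)) = norm (q*a) * norm q ^ (2*i)" by (simp add: norm_mult norm_power)
      also have "\<dots> \<le> 1" using qa q by (simp add: mult_le_one power_le_one)
      finally show ?thesis .
    qed
    then have n2: "norm (1 - a*q*q^(2*i)) \<le> 2"
      by (smt (verit) norm_one norm_triangle_ineq4)
    have n3: "norm (q^Suc k) \<le> 1" unfolding norm_power using q by (intro power_le_one) auto
    have "norm ((1 - a*q*q^(2*i)) * q^(Suc k)) \<le> 2"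
      using n2 n3 by (simp add: norm_mult) (smt (verit) mult_left_le norm_ge_zero)
    then show ?thesis using n1 by (smt (verit) norm_triangle_ineq)
  qed
  define K where "K = 4 * E1 * E2 / (c1 * c2)"
  show ?thesis
  proof (intro exI allI)
    fix i k
    have eqn: "norm (gW a q i (Suc k)) = (norm q ^ 2) ^ i * norm ((1 - q*a) + (1 - a*q*q^(2*i)) * q^(Suc k))
       * norm (qpoch (q^(2*i)*q^2) (q^2) k) * norm (q*a) ^ Suc k * norm (qpoch (q^2*a^2) (q^2) i)
       / (norm (qpoch q q k) * norm (qpoch (a*q) q (2*i+k+2)))"
      by (simp add: gW_def norm_mult norm_divide norm_power power_mult norm_minus_commute)
    have num: "(norm q ^ 2) ^ i * norm ((1 - q*a) + (1 - a*q*q^(2*i)) * q^(Suc k))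
       * norm (qpoch (q^(2*i)*q^2) (q^2) k) * norm (q*a) ^ Suc k * norm (qpoch (q^2*a^2) (q^2) i)
       \<le> (norm q ^ 2) ^ i * 4 * E1 * norm (q*a) ^ Suc k * E2"
      by (intro mult_mono br E1 E2) (auto simp: zero_le_mult_iff E1_def E2_def)
    have den: "c1 * c2 \<le> norm (qpoch q q k) * norm (qpoch (a*q) q (2*i+k+2))"
      using c1 c2 by (intro mult_mono) auto
    have "norm (gW a q i (Suc k)) \<le> (norm q ^ 2) ^ i * 4 * E1 * norm (q*a) ^ Suc k * E2 / (c1 * c2)"
      unfolding eqn
    proof (rule frac_le)
      show "0 \<le> (norm q ^ 2) ^ i * 4 * E1 * norm (q*a) ^ Suc k * E2"
        by (simp add: E1_def E2_def)
      show "0 < c1 * c2" using c1 c2 by simp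
    qed (use num den in auto)
    also have "\<dots> = K * (norm q ^ 2) ^ i * norm (q*a) ^ Suc k" by (simp add: K_def field_simps)
    finally show "norm (gW a q i (Suc k)) \<le> K * (norm q ^ 2) ^ i * norm (q*a) ^ Suc k" .
  qed
qed



lemma term_e2:
  assumes hq: "norm q < 1"
  shows "qpoch (q^2) (q^2) N * (-q*a)^Suc N / (qpoch q q (Suc N - 0) * qpoch (a*q) q (Suc N + 0))
     = qpoch (- q) q N * (- q * a) ^ Suc N / (qpoch (q * a) q (Suc N) * (1 - q ^ Suc N))"
proof -
  have nz: "qpoch q q N \<noteq> 0" using qpoch_qq_nz[OF hq] .
  have e: "qpoch q q (Suc N) = qpoch q q N * (1 - q^Suc N)" by (simp add: qpoch_Suc)
  have c: "\<And>P R X u W::complex. P \<noteq> 0 \<Longrightarrow> (P*R)*X/((P*u)*W) = R*X/(W*u)" by simp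
  show ?thesis unfolding qpoch_sq diff_zero add_0_right e mult.commute[of q a]
    using c[OF nz] by simp
qed

lemma term_j:
  assumes nzs: "qpoch (q^2*a^2) (q^2) (Suc j) \<noteq> 0" and jN: "j \<le> N"
  shows "qpoch (q^2) (q^2) N * (-q*a)^Suc N * (\<alpha> (Suc j) / (qpoch q q (Suc N - Suc j) * qpoch (a*q) q (Suc N + Suc j)))
    = (qpoch (q^2) (q^2) j * (-q*a)^Suc j / qpoch (q^2*a^2) (q^2) (Suc j) * \<alpha> (Suc j)) * fW a q (Suc j) (N - j)"
proof -
  have N: "N = j + (N - j)" using jN by simp
  have pp: "qpoch (q^2) (q^2) N = qpoch (q^2) (q^2) j * qpoch (q^(2*Suc j)) (q^2) (N - j)"
  proof -
    have "qpoch (q^2) (q^2) (j + (N - j)) = qpoch (q^2) (q^2) j * qpoch (q^2 * (q^2)^j) (q^2) (N - j)"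
      by (rule qpoch_add)
    moreover have "q^2 * (q^2)^j = q^(2*Suc j)" by (simp add: power_mult[symmetric] power_add[symmetric])
    ultimately show ?thesis using N by simp
  qed
  have xx: "(-q*a)^Suc N = (-q*a)^Suc j * (-q*a)^(N-j)"
    by (subst N) (simp add: power_add)
  have i1: "Suc N - Suc j = N - j" by simp
  have i2: "Suc N + Suc j = 2 * Suc j + (N - j)" using jN by simp
  show ?thesis unfolding fW_def pp xx i1 i2 using nzs by (simp add: field_simps)
qed

lemma finite_identity:
  fixes a q :: complex and \<alpha> \<beta> :: "nat \<Rightarrow> complex"
  assumes hq: "norm q < 1" and bp: "bailey_pair a q \<alpha> \<beta>"
    and nza: "\<And>n. qpoch (a * q) q n \<noteq> 0"
    and nzs: "\<And>n. qpoch (q^2 * a^2) (q^2) n \<noteq> 0"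
  defines "ab \<equiv> \<lambda>n. qpoch (q^2) (q^2) n * (- q * a) ^ Suc n * \<beta> (Suc n)"
    and "bb \<equiv> \<lambda>n. qpoch (q^2) (q^2) n * (- q * a) ^ Suc n / qpoch (q^2 * a^2) (q^2) (Suc n) * \<alpha> (Suc n)"
    and "e2 \<equiv> \<lambda>n. qpoch (- q) q n * (- q * a) ^ Suc n / (qpoch (q * a) q (Suc n) * (1 - q ^ Suc n))"
  shows "(\<Sum>n<N. ab n) - (\<Sum>n<N. bb n) - (\<Sum>n<N. e2 n) = (\<Sum>j<N. bb j * (Sf a q (Suc j) (N - j) - 1))"
proof (induction N)
  case 0 then show ?case by simp
next
  case (Suc N)
  have a0: "\<alpha> 0 = 1" and bS: "\<beta> (Suc N) = (\<Sum>i\<le>Suc N. \<alpha> i / (qpoch q q (Suc N - i) * qpoch (a * q) q (Suc N + i)))"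
    using bp unfolding bailey_pair_def by auto
  have abN: "ab N = e2 N + (\<Sum>j\<le>N. bb j * fW a q (Suc j) (N - j))"
  proof -
    have "ab N = qpoch (q^2) (q^2) N * (-q*a)^Suc N * (\<alpha> 0 / (qpoch q q (Suc N - 0) * qpoch (a * q) q (Suc N + 0))
       + (\<Sum>j\<le>N. \<alpha> (Suc j) / (qpoch q q (Suc N - Suc j) * qpoch (a * q) q (Suc N + Suc j))))"
      unfolding ab_def bS sum.atMost_Suc_shift by simp
    also have "\<dots> = qpoch (q^2) (q^2) N * (-q*a)^Suc N / (qpoch q q (Suc N - 0) * qpoch (a * q) q (Suc N + 0))
       + (\<Sum>j\<le>N. qpoch (q^2) (q^2) N * (-q*a)^Suc N * (\<alpha> (Suc j) / (qpoch q q (Suc N - Suc j) * qpoch (a * q) q (Suc N + Suc j))))"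
      by (simp add: a0 distrib_left sum_distrib_left)
    also have "\<dots> = e2 N + (\<Sum>j\<le>N. bb j * fW a q (Suc j) (N - j))"
      unfolding e2_def bb_def term_e2[OF hq]
    proof (intro arg_cong2[where f="(+)"] refl sum.cong)
      fix j assume "j \<in> {..N}"
      then show "qpoch (q^2) (q^2) N * (-q*a)^Suc N * (\<alpha> (Suc j) / (qpoch q q (Suc N - Suc j) * qpoch (a * q) q (Suc N + Suc j)))
        = (qpoch (q^2) (q^2) j * (-q*a)^Suc j / qpoch (q^2*a^2) (q^2) (Suc j) * \<alpha> (Suc j)) * fW a q (Suc j) (N - j)"
        by (intro term_j[OF nzs]) simp
    qed
    finally show ?thesis .
  qed
  have SfS: "Sf a q (Suc j) (Suc N - j) = Sf a q (Suc j) (N - j) + fW a q (Suc j) (N - j)" if "j \<le> N" for j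
  proof -
    have "Suc N - j = Suc (N - j)" using that by simp
    then show ?thesis by (simp add: Sf_def)
  qed
  have "(\<Sum>j<Suc N. bb j * (Sf a q (Suc j) (Suc N - j) - 1))
      = (\<Sum>j<Suc N. bb j * (Sf a q (Suc j) (N - j) - 1) + bb j * fW a q (Suc j) (N - j))"
    by (intro sum.cong refl) (simp add: SfS algebra_simps)
  also have "\<dots> = (\<Sum>j<N. bb j * (Sf a q (Suc j) (N - j) - 1)) - bb N + (\<Sum>j\<le>N. bb j * fW a q (Suc j) (N - j))"
    by (simp add: sum.distrib lessThan_Suc_atMost[symmetric] Sf_def)
  finally show ?case using Suc.IH abN by (simp add: algebra_simps)
qed



lemma geom_le:
  fixes r :: real assumes r: "0 \<le> r" "r < 1" shows "(\<Sum>i<n. r ^ i) \<le> 1 / (1 - r)"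
proof -
  have "(\<Sum>i<n. r ^ i) = (1 - r ^ n) / (1 - r)" using r by (simp add: sum_gp_strict)
  also have "\<dots> \<le> 1 / (1 - r)" using r by (intro divide_right_mono) auto
  finally show ?thesis .
qed

lemma Sf_bound:
  assumes hq: "norm q < 1" and hqa: "norm (q*a) < 1" and nza: "\<And>n. qpoch (a * q) q n \<noteq> 0"
  shows "\<exists>C\<ge>0. \<forall>j M. norm (Sf a q (Suc j) (Suc M) - 1) \<le> C * norm (q*a) ^ Suc M"
proof -
  obtain K where K: "\<And>i k. norm (gW a q i (Suc k)) \<le> K * (norm q ^ 2) ^ i * norm (q*a) ^ Suc k"
    using gW_bound[OF hq hqa nza] by blast
  define K0 where "K0 = max K 0"
  define r where "r = norm q ^ 2"
  have r: "0 \<le> r" "r < 1" using hq by (simp_all add: r_def power_less_one_iff)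
  have K0: "norm (gW a q i (Suc k)) \<le> K0 * r ^ i * norm (q*a) ^ Suc k" for i k
  proof -
    have "K * (norm q ^ 2) ^ i * norm (q*a) ^ Suc k \<le> K0 * r ^ i * norm (q*a) ^ Suc k"
      unfolding K0_def r_def by (intro mult_right_mono) auto
    then show ?thesis using K[of i k] by linarith
  qed
  show ?thesis
  proof (intro exI[of _ "K0 / (1 - r)"] conjI allI)
    show "0 \<le> K0 / (1 - r)" using r by (simp add: K0_def)
    fix j M
    have eq: "Sf a q (Suc j) (Suc M) - 1 = (\<Sum>i<Suc j. gW a q i (Suc M))"
      using Sf_eq[OF qpoch_qq_nz[OF hq] nza] by simp
    have "norm (Sf a q (Suc j) (Suc M) - 1) \<le> (\<Sum>i<Suc j. norm (gW a q i (Suc M)))"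
      unfolding eq by (rule norm_sum)
    also have "\<dots> \<le> (\<Sum>i<Suc j. K0 * r ^ i * norm (q*a) ^ Suc M)"
      by (intro sum_mono K0)
    also have "\<dots> = K0 * norm (q*a) ^ Suc M * (\<Sum>i<Suc j. r ^ i)"
      unfolding sum_distrib_left by (intro sum.cong refl) (simp add: mult_ac)
    also have "\<dots> \<le> K0 * norm (q*a) ^ Suc M * (1 / (1 - r))"
    proof (intro mult_left_mono)
      show "(\<Sum>i<Suc j. r ^ i) \<le> 1 / (1 - r)" using geom_le[OF r] .
      show "0 \<le> K0 * norm (q*a) ^ Suc M" by (simp add: K0_def)
    qed
    also have "\<dots> = K0 / (1 - r) * norm (q*a) ^ Suc M" by simp
    finally show "norm (Sf a q (Suc j) (Suc M) - 1) \<le> K0 / (1 - r) * norm (q*a) ^ Suc M" .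
  qed
qed

lemma diff3_eq: "(x::complex) - y - z = w \<Longrightarrow> z = x - y - w"
  by (simp add: algebra_simps)

lemma main_bailey:
  fixes a q :: complex and \<alpha> \<beta> :: "nat \<Rightarrow> complex"
  assumes hq: "norm q < 1" and hqa: "norm (q*a) < 1" and bp: "bailey_pair a q \<alpha> \<beta>"
    and nza: "\<And>n. qpoch (a * q) q n \<noteq> 0"
    and nzs: "\<And>n. qpoch (q^2 * a^2) (q^2) n \<noteq> 0"
    and sb: "summable (\<lambda>n. norm (qpoch (q^2) (q^2) n * (- q * a) ^ Suc n * \<beta> (Suc n)))"
    and sa: "summable (\<lambda>n. norm (qpoch (q^2) (q^2) n * (- q * a) ^ Suc n / qpoch (q^2 * a^2) (q^2) (Suc n) * \<alpha> (Suc n)))"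
  shows "(\<lambda>n. qpoch (- q) q n * (- q * a) ^ Suc n / (qpoch (q * a) q (Suc n) * (1 - q ^ Suc n))) sums
     ((\<Sum>n. qpoch (q^2) (q^2) n * (- q * a) ^ Suc n * \<beta> (Suc n))
      - (\<Sum>n. qpoch (q^2) (q^2) n * (- q * a) ^ Suc n / qpoch (q^2 * a^2) (q^2) (Suc n) * \<alpha> (Suc n)))"
proof -
  define ab where "ab = (\<lambda>n. qpoch (q^2) (q^2) n * (- q * a) ^ Suc n * \<beta> (Suc n))"
  define bb where "bb = (\<lambda>n. qpoch (q^2) (q^2) n * (- q * a) ^ Suc n / qpoch (q^2 * a^2) (q^2) (Suc n) * \<alpha> (Suc n))"
  define e2 where "e2 = (\<lambda>n. qpoch (- q) q n * (- q * a) ^ Suc n / (qpoch (q * a) q (Suc n) * (1 - q ^ Suc n)))"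
  define R where "R = (\<lambda>N. \<Sum>j<N. bb j * (Sf a q (Suc j) (N - j) - 1))"
  have fi: "(\<Sum>n<N. e2 n) = (\<Sum>n<N. ab n) - (\<Sum>n<N. bb n) - R N" for N
    unfolding ab_def bb_def e2_def R_def
    by (rule diff3_eq[OF finite_identity[OF hq bp nza nzs, of N]])
  obtain C where C: "C \<ge> 0" "\<And>j M. norm (Sf a q (Suc j) (Suc M) - 1) \<le> C * norm (q*a) ^ Suc M"
    using Sf_bound[OF hq hqa nza] by blast
  define t where "t = norm (q*a)"
  have t: "0 \<le> t" "t < 1" using hqa by (simp_all add: t_def)
  define c where "c = (\<lambda>M. \<Sum>i\<le>M. norm (bb i) * t ^ (M - i))"
  have csum: "summable c"
  proof -
    have "summable (\<lambda>k. norm (norm (bb k)))" using sa by (simp add: bb_def)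
    moreover have "summable (\<lambda>k. norm (t ^ k))" using t by (simp add: summable_geometric)
    ultimately show ?thesis unfolding c_def by (rule summable_Cauchy_product)
  qed
  have c0: "c \<longlonglongrightarrow> 0" by (rule summable_LIMSEQ_zero[OF csum])
  have Rb: "norm (R (Suc M)) \<le> C * t * c M" for M
  proof -
    have "norm (R (Suc M)) \<le> (\<Sum>j<Suc M. norm (bb j) * norm (Sf a q (Suc j) (Suc M - j) - 1))"
      unfolding R_def by (rule order_trans[OF norm_sum]) (simp add: norm_mult)
    also have "\<dots> \<le> (\<Sum>j<Suc M. norm (bb j) * (C * t * t ^ (M - j)))"
    proof (intro sum_mono mult_left_mono)
      fix j assume "j \<in> {..<Suc M}"
      then have "Suc M - j = Suc (M - j)" by simp
      then show "norm (Sf a q (Suc j) (Suc M - j) - 1) \<le> C * t * t ^ (M - j)"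
        using C(2)[of j "M - j"] by (simp add: t_def mult.assoc)
    qed simp
    also have "\<dots> = C * t * c M"
      by (simp add: c_def sum_distrib_left lessThan_Suc_atMost algebra_simps)
    finally show ?thesis .
  qed
  have R0: "R \<longlonglongrightarrow> 0"
  proof (rule LIMSEQ_imp_Suc, rule tendsto_norm_zero_cancel, rule tendsto_sandwich)
    show "\<forall>\<^sub>F n in sequentially. 0 \<le> norm (R (Suc n))" by simp
    show "\<forall>\<^sub>F n in sequentially. norm (R (Suc n)) \<le> C * t * c n" using Rb by simp
    show "(\<lambda>n. 0) \<longlonglongrightarrow> (0::real)" by simp
    show "(\<lambda>n. C * t * c n) \<longlonglongrightarrow> 0" using tendsto_mult_left[OF c0, of "C*t"] by simp
  qed
  have "(\<lambda>N. (\<Sum>n<N. ab n) - (\<Sum>n<N. bb n) - R N) \<longlonglongrightarrow> suminf ab - suminf bb - 0"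
  proof (intro tendsto_diff R0)
    have "summable ab" unfolding ab_def by (rule summable_norm_cancel[OF sb])
    then show "(\<lambda>N. \<Sum>n<N. ab n) \<longlonglongrightarrow> suminf ab" using summable_sums[unfolded sums_def] by blast
    have "summable bb" unfolding bb_def by (rule summable_norm_cancel[OF sa])
    then show "(\<lambda>N. \<Sum>n<N. bb n) \<longlonglongrightarrow> suminf bb" using summable_sums[unfolded sums_def] by blast
  qed
  then have "e2 sums (suminf ab - suminf bb)" unfolding sums_def fi by simp
  then show ?thesis unfolding e2_def ab_def bb_def .
qed



definition e2f :: "complex \<Rightarrow> complex \<Rightarrow> nat \<Rightarrow> complex" where
  "e2f q b n = qpoch (- q) q n * (- q * b) ^ Suc n / (qpoch (q * b) q (Suc n) * (1 - q ^ Suc n))"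
definition wf :: "complex \<Rightarrow> complex \<Rightarrow> nat \<Rightarrow> complex" where
  "wf q b n = qpoch (- q) q n * (- q * b) ^ Suc n / qpoch (q * b) q (Suc n)"
definition hf :: "complex \<Rightarrow> complex \<Rightarrow> nat \<Rightarrow> complex" where
  "hf q b n = b * q ^ Suc n / (1 - b\<^sup>2 * q ^ (2 * Suc n))"

lemma tele_alg:
  fixes P X A1 A2 A3 b q z u v :: complex
  assumes "A1 \<noteq> 0" "A2 \<noteq> 0" "A3 \<noteq> 0" "1 - q*z \<noteq> 0" "1 + q*b \<noteq> 0"
    and r: "A3 = A1*u" "A3 = v*A2" "u = 1 - q*b*q*z" "v = 1 - q*b"
  shows "P*X/(A1*(1-q*z)) - P*(X*(q*z))/(A2*(1-q*z)) = (P*X/A1 - P*(1+q*z)*(X*(-q*b))/A3)/(1+q*b)"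
proof -
  have h: "A1 * inverse A1 = 1" "A2 * inverse A2 = 1" "A3 * inverse A3 = 1"
    "(1-q*z) * inverse (1-q*z) = 1" "(1+q*b) * inverse (1+q*b) = 1" using assms(1-5) by auto
  show ?thesis unfolding divide_inverse inverse_mult_distrib using h r by algebra
qed

lemma e2f_tele:
  assumes hq: "norm q < 1" and hqb: "norm (q*b) < 1" and nzb: "\<And>n. qpoch (q*b) q n \<noteq> 0"
  shows "e2f q b n - e2f q (b*q) n = (wf q b n - wf q b (Suc n)) / (1 + q*b)"
proof -
  define P where "P = qpoch (- q) q n"
  define X where "X = (- q * b) ^ Suc n"
  define A1 where "A1 = qpoch (q*b) q (Suc n)"
  define A2 where "A2 = qpoch (q*(b*q)) q (Suc n)"
  define A3 where "A3 = qpoch (q*b) q (Suc (Suc n))"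
  define z where "z = q ^ n"
  have r1: "A3 = A1 * (1 - q*b*q*z)" by (simp add: A3_def A1_def z_def qpoch_Suc[of _ _ "Suc n"] mult_ac)
  have r2: "A3 = (1 - q*b) * A2" by (simp add: A3_def A2_def qpoch_shift[of _ _ "Suc n"] mult_ac)
  have nz: "A1 \<noteq> 0" "A3 \<noteq> 0" using nzb by (simp_all add: A1_def A3_def)
  then have nz2: "A2 \<noteq> 0" using r2 by auto
  have qz: "1 - q*z \<noteq> 0" using qpoch_nz_factor[OF qpoch_qq_nz[OF hq, of "Suc n"]] by (simp add: z_def)
  have qb: "1 + q*b \<noteq> 0"
  proof
    assume h: "1 + q*b = 0"
    have "q*b = (1 + q*b) - 1" by simp
    then have "q*b = -1" using h by simp
    then show False using hqb by simp
  qed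
  have xq: "(- q * (b*q)) ^ Suc n = X * (q*z)"
  proof -
    have "- q * (b*q) = (-q*b)*q" by simp
    then have "(- q * (b*q)) ^ Suc n = (-q*b) ^ Suc n * q ^ Suc n" by (simp only: power_mult_distrib)
    then show ?thesis by (simp add: X_def z_def)
  qed
  have L: "e2f q b n - e2f q (b*q) n = P*X/(A1*(1-q*z)) - P*(X*(q*z))/(A2*(1-q*z))"
    unfolding e2f_def xq by (simp add: P_def X_def A1_def A2_def z_def)
  have R: "wf q b n - wf q b (Suc n) = P*X/A1 - P*(1+q*z)*(X*(-q*b))/A3"
    by (simp add: wf_def P_def X_def A1_def A3_def z_def qpoch_Suc mult_ac)
  show ?thesis unfolding L R
    by (rule tele_alg[OF nz(1) nz2 nz(2) qz qb r1 r2 refl refl])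
qed



lemma norm_one_minus_ge: "1 - norm (w::complex) \<le> norm (1 - w)"
  by (metis norm_one norm_triangle_ineq2)

lemma fam_lower:
  fixes a q :: complex
  assumes hq: "norm q < 1" and nza: "\<And>n. qpoch (a * q) q n \<noteq> 0"
  shows "\<exists>L>0. \<forall>k n. L \<le> norm (qpoch (q*(a*q^k)) q n)"
proof -
  obtain c where c: "c > 0" "\<And>n. c \<le> norm (qpoch (a*q) q n)" using qpoch_norm_lower[OF hq nza] by blast
  define E where "E = exp (norm (a*q) / (1 - norm q))"
  have E: "norm (qpoch (a*q) q k) \<le> E" for k unfolding E_def by (rule qpoch_norm_upper[OF hq])
  have Epos: "E > 0" unfolding E_def by simp
  show ?thesis
  proof (intro exI[of _ "c/E"] conjI allI)
    show "c/E > 0" using c Epos by simp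
    fix k n
    have eq: "qpoch (a*q) q (k+n) = qpoch (a*q) q k * qpoch (q*(a*q^k)) q n"
      by (simp add: qpoch_add mult_ac)
    have nk: "norm (qpoch (a*q) q k) > 0" using nza by simp
    have "c \<le> norm (qpoch (a*q) q k) * norm (qpoch (q*(a*q^k)) q n)"
      using c(2)[of "k+n"] unfolding eq norm_mult .
    also have "\<dots> \<le> E * norm (qpoch (q*(a*q^k)) q n)" using E[of k] by (intro mult_right_mono) auto
    finally show "c/E \<le> norm (qpoch (q*(a*q^k)) q n)" using Epos by (simp add: divide_le_eq mult.commute)
  qed
qed

lemma sq_lower:
  fixes a q :: complex
  assumes hq: "norm q < 1" and nzs: "\<And>n. qpoch (q^2 * a^2) (q^2) n \<noteq> 0"
  shows "\<exists>L>0. \<forall>m. L \<le> norm (1 - a^2 * q^(2 * Suc m))"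
proof -
  have q2: "norm (q^2) < 1" using hq by (simp add: norm_power power_less_one_iff)
  obtain c where c: "c > 0" "\<And>n. c \<le> norm (qpoch (q^2*a^2) (q^2) n)" using qpoch_norm_lower[OF q2 nzs] by blast
  define E where "E = exp (norm (q^2*a^2) / (1 - norm (q^2)))"
  have E: "norm (qpoch (q^2*a^2) (q^2) k) \<le> E" for k unfolding E_def by (rule qpoch_norm_upper[OF q2])
  have Epos: "E > 0" unfolding E_def by simp
  show ?thesis
  proof (intro exI[of _ "c/E"] conjI allI)
    show "c/E > 0" using c Epos by simp
    fix m
    have pw: "q^2*a^2*(q^2)^m = a^2 * q^(2 * Suc m)"
      by (simp add: power_mult[symmetric] power_add[symmetric] mult_ac)
    have eq: "qpoch (q^2*a^2) (q^2) (Suc m) = qpoch (q^2*a^2) (q^2) m * (1 - a^2 * q^(2 * Suc m))"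
      by (simp add: qpoch_Suc pw)
    have "c \<le> norm (qpoch (q^2*a^2) (q^2) m) * norm (1 - a^2 * q^(2 * Suc m))"
      using c(2)[of "Suc m"] unfolding eq norm_mult .
    also have "\<dots> \<le> E * norm (1 - a^2 * q^(2 * Suc m))" using E[of m] by (intro mult_right_mono) auto
    finally show "c/E \<le> norm (1 - a^2 * q^(2 * Suc m))" using Epos by (simp add: divide_le_eq mult.commute)
  qed
qed

lemma norm_b_le:
  fixes a q :: complex
  assumes hq: "norm q < 1" shows "norm (q*(a*q^k)) \<le> norm (q*a)"
proof -
  have "norm (q*(a*q^k)) = norm (q*a) * norm q ^ k" by (simp add: norm_mult norm_power mult_ac)
  also have "\<dots> \<le> norm (q*a)" using hq by (simp add: mult_left_le power_le_one)
  finally show ?thesis .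
qed

lemma e2f_bound:
  fixes a q :: complex
  assumes hq: "norm q < 1" and nza: "\<And>n. qpoch (a * q) q n \<noteq> 0"
  shows "\<exists>K\<ge>0. \<forall>k n. norm (e2f q (a*q^k) n) \<le> K * norm (a*q^k) * norm (q*a) ^ n
                  \<and> norm (wf q (a*q^k) n) \<le> K * norm (a*q^k) * norm (q*a) ^ n"
proof -
  obtain L where L: "L > 0" "\<And>k n. L \<le> norm (qpoch (q*(a*q^k)) q n)" using fam_lower[OF hq nza] by blast
  define Em where "Em = exp (norm (- q) / (1 - norm q))"
  have Em: "norm (qpoch (- q) q n) \<le> Em" for n unfolding Em_def by (rule qpoch_norm_upper[OF hq])
  have Empos: "Em > 0" unfolding Em_def by simp
  define K where "K = Em * norm q / (L * (1 - norm q))"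
  have Kpos: "K \<ge> 0" unfolding K_def using Empos L hq by simp
  show ?thesis
  proof (intro exI[of _ K] conjI allI Kpos)
    fix k n
    define b where "b = a*q^k"
    have num: "norm (qpoch (- q) q n * (- q * b) ^ Suc n) \<le> Em * (norm q * norm b * norm (q*a) ^ n)"
    proof -
      have "norm ((- q * b) ^ Suc n) = norm q * norm b * norm (q*b) ^ n"
        by (simp add: norm_mult norm_power)
      also have "\<dots> \<le> norm q * norm b * norm (q*a) ^ n"
        using norm_b_le[OF hq, of a k] unfolding b_def
        by (intro mult_left_mono power_mono) auto
      finally show ?thesis unfolding norm_mult using Em[of n] Empos by (intro mult_mono) auto
    qed
    have d1: "L \<le> norm (qpoch (q*b) q (Suc n))" unfolding b_def by (rule L(2))
    have d2: "1 - norm q \<le> norm (1 - q ^ Suc n)"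
    proof -
      have "norm (q ^ Suc n) \<le> norm q" using hq by (simp add: norm_mult norm_power mult_left_le power_le_one)
      then show ?thesis using norm_one_minus_ge[of "q ^ Suc n"] by linarith
    qed
    have "norm (e2f q b n) = norm (qpoch (- q) q n * (- q * b) ^ Suc n) / (norm (qpoch (q*b) q (Suc n)) * norm (1 - q ^ Suc n))"
      by (simp add: e2f_def norm_mult norm_divide)
    also have "\<dots> \<le> Em * (norm q * norm b * norm (q*a) ^ n) / (L * (1 - norm q))"
      using hq L(1) by (intro frac_le num mult_mono d1 d2) (auto simp: Empos less_imp_le)
    also have "\<dots> = K * norm b * norm (q*a) ^ n" by (simp add: K_def field_simps)
    finally show "norm (e2f q (a*q^k) n) \<le> K * norm (a*q^k) * norm (q*a) ^ n" unfolding b_def .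
    have "norm (wf q b n) = norm (qpoch (- q) q n * (- q * b) ^ Suc n) / norm (qpoch (q*b) q (Suc n))"
      by (simp add: wf_def norm_mult norm_divide)
    also have "\<dots> \<le> Em * (norm q * norm b * norm (q*a) ^ n) / L"
      using hq L(1) Empos by (intro frac_le num d1) (auto intro!: mult_nonneg_nonneg)
    also have "\<dots> \<le> Em * (norm q * norm b * norm (q*a) ^ n) / (L * (1 - norm q))"
    proof (rule divide_left_mono)
      show "0 \<le> Em * (norm q * norm b * norm (q*a) ^ n)" using Empos by simp
      show "L * (1 - norm q) \<le> L" using L(1) hq by (simp add: mult_left_le)
      show "0 < L * (L * (1 - norm q))" using L(1) hq by simp
    qed
    also have "\<dots> = K * norm b * norm (q*a) ^ n" by (simp add: K_def field_simps)
    finally show "norm (wf q (a*q^k) n) \<le> K * norm (a*q^k) * norm (q*a) ^ n" unfolding b_def .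
  qed
qed

lemma hf_bound:
  fixes a q :: complex
  assumes hq: "norm q < 1" and nzs: "\<And>n. qpoch (q^2 * a^2) (q^2) n \<noteq> 0"
  shows "\<exists>K\<ge>0. \<forall>k n. norm (hf q (a*q^k) n) \<le> K * norm (a*q^k) * norm q ^ n"
proof -
  obtain L where L: "L > 0" "\<And>m. L \<le> norm (1 - a^2 * q^(2 * Suc m))" using sq_lower[OF hq nzs] by blast
  show ?thesis
  proof (intro exI[of _ "1/L"] conjI allI)
    show "0 \<le> 1/L" using L by simp
    fix k n
    define b where "b = a*q^k"
    have den: "b^2 * q^(2 * Suc n) = a^2 * q^(2 * Suc (k+n))"
      by (simp add: b_def power_mult_distrib power_mult[symmetric] power_add[symmetric] mult_ac)
    have num: "norm (b * q ^ Suc n) \<le> norm b * norm q ^ n"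
    proof -
      have "norm q * norm q ^ n \<le> norm q ^ n" using hq by (simp add: mult_left_le_one_le)
      then have "norm b * (norm q * norm q ^ n) \<le> norm b * norm q ^ n" by (simp add: mult_left_mono)
      then show ?thesis by (simp add: norm_mult norm_power)
    qed
    have "norm (hf q b n) = norm (b * q ^ Suc n) / norm (1 - b^2 * q^(2 * Suc n))"
      unfolding hf_def by (rule norm_divide)
    also have "\<dots> = norm (b * q ^ Suc n) / norm (1 - a^2 * q^(2 * Suc (k+n)))"
      unfolding den ..
    also have "\<dots> \<le> norm b * norm q ^ n / L"
      using L(1) by (intro frac_le num L(2)) auto
    also have "\<dots> = 1/L * norm b * norm q ^ n" by simp
    finally show "norm (hf q (a*q^k) n) \<le> 1/L * norm (a*q^k) * norm q ^ n" unfolding b_def .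
  qed
qed



lemma geom_bound_summable:
  fixes f :: "nat \<Rightarrow> complex" and C r :: real
  assumes b: "\<And>n. norm (f n) \<le> C * r ^ n" and r: "0 \<le> r" "r < 1"
  shows "summable f" "norm (suminf f) \<le> C / (1 - r)"
proof -
  have g: "summable (\<lambda>n. C * r ^ n)" using r by (intro summable_mult summable_geometric) simp
  have sn: "summable (\<lambda>n. norm (f n))"
    by (rule summable_comparison_test[OF _ g]) (use b in simp)
  show "summable f" by (rule summable_norm_cancel[OF sn])
  have "norm (suminf f) \<le> (\<Sum>n. norm (f n))" by (rule summable_norm[OF sn])
  also have "\<dots> \<le> (\<Sum>n. C * r ^ n)" by (rule suminf_le[OF b sn g])
  also have "\<dots> = C / (1 - r)" using r by (simp add: suminf_mult suminf_geometric)
  finally show "norm (suminf f) \<le> C / (1 - r)" .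
qed

lemma third_expr:
  fixes a q :: complex
  assumes hq: "norm q < 1" and hqa: "norm (q*a) < 1"
    and nza: "\<And>n. qpoch (a * q) q n \<noteq> 0"
    and nzs: "\<And>n. qpoch (q^2 * a^2) (q^2) n \<noteq> 0"
  shows "suminf (e2f q a) = - suminf (hf q a)"
proof -
  obtain K1 where K1: "K1 \<ge> 0" "\<And>k n. norm (e2f q (a*q^k) n) \<le> K1 * norm (a*q^k) * norm (q*a) ^ n"
      "\<And>k n. norm (wf q (a*q^k) n) \<le> K1 * norm (a*q^k) * norm (q*a) ^ n"
    using e2f_bound[OF hq nza] by blast
  obtain K2 where K2: "K2 \<ge> 0" "\<And>k n. norm (hf q (a*q^k) n) \<le> K2 * norm (a*q^k) * norm q ^ n"
    using hf_bound[OF hq nzs] by blast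
  obtain L where L: "L > 0" "\<And>k n. L \<le> norm (qpoch (q*(a*q^k)) q n)" using fam_lower[OF hq nza] by blast
  define D where "D = (\<lambda>k. suminf (e2f q (a*q^k)) + suminf (hf q (a*q^k)))"
  have tq: "0 \<le> norm (q*a)" "norm (q*a) < 1" using hqa by auto
  have tq2: "0 \<le> norm q" "norm q < 1" using hq by auto
  have se: "summable (e2f q (a*q^k))" and ne: "norm (suminf (e2f q (a*q^k))) \<le> K1 * norm (a*q^k) / (1 - norm (q*a))" for k
    using geom_bound_summable[OF K1(2) tq] by auto
  have sh: "summable (hf q (a*q^k))" and nh: "norm (suminf (hf q (a*q^k))) \<le> K2 * norm (a*q^k) / (1 - norm q)" for k
    using geom_bound_summable[OF K2(2) tq2] by auto
  have step: "D k = D (Suc k)" for k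
  proof -
    define b where "b = a*q^k"
    have bq: "b*q = a*q^Suc k" by (simp add: b_def mult_ac)
    have nzb: "qpoch (q*b) q n \<noteq> 0" for n using L(2)[of k n] L(1) unfolding b_def by auto
    have hqb: "norm (q*b) < 1" using norm_b_le[OF hq, of a k] hqa unfolding b_def by simp
    have w0: "wf q b \<longlonglongrightarrow> 0"
    proof (rule tendsto_norm_zero_cancel, rule tendsto_sandwich)
      show "\<forall>\<^sub>F n in sequentially. 0 \<le> norm (wf q b n)" by simp
      show "\<forall>\<^sub>F n in sequentially. norm (wf q b n) \<le> K1 * norm b * norm (q*a) ^ n"
        using K1(3)[of k] unfolding b_def by simp
      show "(\<lambda>n. 0) \<longlonglongrightarrow> (0::real)" by simp
      show "(\<lambda>n. K1 * norm b * norm (q*a) ^ n) \<longlonglongrightarrow> 0"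
      proof -
        have "(\<lambda>n. norm (q*a) ^ n) \<longlonglongrightarrow> 0" by (rule LIMSEQ_power_zero) (use hqa in simp)
        from tendsto_mult_left[OF this, of "K1 * norm b"] show ?thesis by simp
      qed
    qed
    have s1: "(\<lambda>n. e2f q b n - e2f q (b*q) n) sums (wf q b 0 / (1 + q*b))"
    proof -
      have "(\<lambda>n. (wf q b n - wf q b (Suc n)) / (1 + q*b)) sums ((wf q b 0 - 0) / (1 + q*b))"
        by (rule sums_divide[OF telescope_sums'[OF w0]])
      then show ?thesis using e2f_tele[OF hq hqb nzb] by simp
    qed
    have s2: "(\<lambda>n. e2f q b n - e2f q (b*q) n) sums (suminf (e2f q b) - suminf (e2f q (b*q)))"
      using sums_diff[OF summable_sums[OF se[of k]] summable_sums[OF se[of "Suc k"]]]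
      unfolding b_def bq[unfolded b_def] .
    have G: "suminf (e2f q b) - suminf (e2f q (b*q)) = wf q b 0 / (1 + q*b)"
      using sums_unique2[OF s2 s1] .
    have hs: "hf q b (Suc n) = hf q (b*q) n" for n
    proof -
      have "q ^ (2 * Suc (Suc n)) = q^2 * q ^ (2 * Suc n)" by (simp add: power_add[symmetric])
      then show ?thesis unfolding hf_def by (simp add: power_mult_distrib mult_ac power2_eq_square)
    qed
    have H: "suminf (hf q b) = hf q b 0 + suminf (hf q (b*q))"
      using suminf_split_head[OF sh[of k, folded b_def]] unfolding hs by simp
    have w00: "wf q b 0 = - q*b / (1 - q*b)" by (simp add: wf_def qpoch_Suc)
    have h00: "hf q b 0 = b*q / (1 - b^2*q^2)" by (simp add: hf_def)
    have den: "(1 - q*b) * (1 + q*b) = 1 - b^2*q^2" by (simp add: algebra_simps power2_eq_square)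
    have "wf q b 0 / (1 + q*b) + hf q b 0 = 0"
      unfolding w00 h00 by (simp add: den[symmetric] mult_ac)
    then have "D k = D (Suc k)" unfolding D_def b_def[symmetric] bq[symmetric]
      using G H by (simp add: algebra_simps)
    then show ?thesis .
  qed
  have Dk: "D k = D 0" for k by (induction k) (simp_all add: step[symmetric])
  have Dlim: "(\<lambda>k. D k) \<longlonglongrightarrow> 0"
  proof (rule tendsto_norm_zero_cancel, rule tendsto_sandwich)
    define C where "C = K1 * norm a / (1 - norm (q*a)) + K2 * norm a / (1 - norm q)"
    show "\<forall>\<^sub>F n in sequentially. 0 \<le> norm (D n)" by simp
    have "norm (D k) \<le> C * norm q ^ k" for k
    proof -
      have na: "norm (a*q^k) = norm a * norm q ^ k" by (simp add: norm_mult norm_power)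
      have "norm (D k) \<le> norm (suminf (e2f q (a*q^k))) + norm (suminf (hf q (a*q^k)))"
        unfolding D_def by (rule norm_triangle_ineq)
      also have "\<dots> \<le> K1 * norm (a*q^k) / (1 - norm (q*a)) + K2 * norm (a*q^k) / (1 - norm q)"
        using ne nh by (rule add_mono)
      also have "\<dots> = C * norm q ^ k" unfolding na C_def by (simp add: field_simps)
      finally show ?thesis .
    qed
    then show "\<forall>\<^sub>F n in sequentially. norm (D n) \<le> C * norm q ^ n" by simp
    show "(\<lambda>n. 0) \<longlonglongrightarrow> (0::real)" by simp
    show "(\<lambda>n. C * norm q ^ n) \<longlonglongrightarrow> 0"
    proof -
      have "(\<lambda>n. norm q ^ n) \<longlonglongrightarrow> 0" by (rule LIMSEQ_power_zero) (use hq in simp)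
      from tendsto_mult_left[OF this, of C] show ?thesis by simp
    qed
  qed
  moreover have "D = (\<lambda>k. D 0)" using Dk by auto
  ultimately have "(\<lambda>k. D 0) \<longlonglongrightarrow> 0" by simp
  then have "D 0 = 0" by (simp add: LIMSEQ_const_iff)
  then show ?thesis unfolding D_def by (simp add: eq_neg_iff_add_eq_0)
qed



definition alu :: "complex \<Rightarrow> complex \<Rightarrow> nat \<Rightarrow> complex" where
  "alu a q m = (1 - a*q^(2*m)) * qpoch a q m * (-1)^m * q^(m*(m-1) div 2) / ((1-a) * qpoch q q m)"
definition beu :: "nat \<Rightarrow> complex" where
  "beu m = (if m = 0 then 1 else 0)"

lemma unit_alg:
  fixes s t Y P Rm S a q u v :: complex
  assumes "P \<noteq> 0" "Rm \<noteq> 0" "S \<noteq> 0" "1 - q*v \<noteq> 0" "1 - q*u \<noteq> 0" "1 - a*q*q*u*u*v \<noteq> 0" "1 - u*v*q \<noteq> 0"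
  shows "s*t*Y*(1-q*v)/(P*(Rm*(1-q*v))*S*(1-u*v*q))
     + (1-a*q*q*u*u)*Y*(-s)*t/(P*(1-q*u)) / (Rm*(S*(1-a*q*q*u*u*v)))
     = (-s)*(t*(q*u))*(Y*(1-a*q*u))*(1-v)/((P*(1-q*u))*Rm*(S*(1-a*q*q*u*u*v))*(1-u*v*q))"
proof -
  have h: "P * inverse P = 1" "Rm * inverse Rm = 1" "S * inverse S = 1" "(1-q*v) * inverse (1-q*v) = 1"
    "(1-q*u) * inverse (1-q*u) = 1" "(1-a*q*q*u*u*v) * inverse (1-a*q*q*u*u*v) = 1"
    "(1-u*v*q) * inverse (1-u*v*q) = 1" using assms by auto
  show ?thesis unfolding divide_inverse inverse_mult_distrib using h by algebra
qed

lemma tri_div: "Suc k * (Suc k + 1) div 2 = k * (k+1) div 2 + Suc k"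
proof -
  have "Suc k * (Suc k + 1) = k * (k+1) + 2 * Suc k" by (simp add: algebra_simps)
  then show ?thesis by simp
qed

lemma unit_partial:
  fixes a q :: complex
  assumes hq: "norm q < 1" and a1: "a \<noteq> 1" and nza: "\<And>n. qpoch (a * q) q n \<noteq> 0" and n: "n \<ge> 1"
  shows "k \<le> n \<Longrightarrow> (\<Sum>j\<le>k. alu a q j / (qpoch q q (n - j) * qpoch (a*q) q (n + j)))
     = (-1)^k * q^(k*(k+1) div 2) * qpoch (a*q) q k * (1 - q^(n-k))
       / (qpoch q q k * qpoch q q (n-k) * qpoch (a*q) q (n+k) * (1 - q^n))"
proof (induction k)
  case 0
  have "1 - q^n \<noteq> 0"
  proof -
    obtain m where "n = Suc m" using n by (cases n) auto
    then show ?thesis using qpoch_nz_factor[OF qpoch_qq_nz[OF hq, of "Suc m"]] by simp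
  qed
  then show ?case using a1 by (simp add: alu_def)
next
  case (Suc k)
  then have kn: "k < n" by simp
  define m where "m = n - Suc k"
  have nk: "n - k = Suc m" and nk1: "n - Suc k = m" using kn by (simp_all add: m_def)
  define s where "s = ((-1)::complex)^k"
  define t where "t = q^(k*(k+1) div 2)"
  define Y where "Y = qpoch (a*q) q k"
  define P where "P = qpoch q q k"
  define Rm where "Rm = qpoch q q m"
  define S where "S = qpoch (a*q) q (n+k)"
  define u where "u = q^k"
  define v where "v = q^m"
  have nkv: "n = k + m + 1" using kn by (simp add: m_def)
  have qn: "q^n = u*v*q" by (simp add: nkv u_def v_def power_add)
  have qnk: "q^(n+k) = q*u*u*v" by (simp add: nkv u_def v_def power_add mult_ac)
  have e1: "qpoch q q (Suc m) = Rm * (1 - q*v)" by (simp add: qpoch_Suc Rm_def v_def)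
  have e2: "qpoch (a*q) q (n + Suc k) = S * (1 - a*q*q*u*u*v)"
    using qpoch_Suc[of "a*q" q "n+k"] by (simp add: S_def qnk mult_ac)
  have e3: "qpoch (a*q) q (Suc k) = Y * (1 - a*q*u)" by (simp add: qpoch_Suc Y_def u_def mult_ac)
  have e4: "qpoch q q (Suc k) = P * (1 - q*u)" by (simp add: qpoch_Suc P_def u_def)
  have e5: "q^(Suc k * (Suc k + 1) div 2) = t*(q*u)" unfolding tri_div power_add t_def u_def by simp
  have e6: "q^(Suc m) = q*v" by (simp add: v_def)
  have e7: "q^(Suc k * (Suc k - 1) div 2) = t" by (simp add: t_def mult.commute)
  have e8: "qpoch a q (Suc k) = (1 - a) * Y" by (simp add: qpoch_shift Y_def)
  have e9: "q^(2 * Suc k) = q*q*u*u" unfolding u_def mult_2 power_add by (simp add: mult_ac)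
  have al: "alu a q (Suc k) = (1-a*q*q*u*u)*Y*(-s)*t/(P*(1-q*u))"
  proof -
    have "alu a q (Suc k) = (1 - a) * ((1 - a*q*q*u*u) * Y * (-1)^Suc k * t) / ((1-a) * (P*(1-q*u)))"
      unfolding alu_def e7 e8 e9 e4 by (simp add: mult_ac)
    also have "\<dots> = (1 - a*q*q*u*u) * Y * (-1)^Suc k * t / (P*(1-q*u))"
      using a1 by (intro mult_divide_mult_cancel_left) simp
    finally show ?thesis by (simp add: s_def)
  qed
  have nzP: "P \<noteq> 0" "Rm \<noteq> 0" unfolding P_def Rm_def using qpoch_qq_nz[OF hq] by auto
  have nzS: "S \<noteq> 0" "1 - a*q*q*u*u*v \<noteq> 0" using nza[of "n+k"] nza[of "n + Suc k"] e2 by (auto simp: S_def)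
  have qn1: "1 - q^n \<noteq> 0"
    using qpoch_nz_factor[OF qpoch_qq_nz[OF hq, of "Suc (k+m)"]] by (simp add: nkv)
  have nzq: "1 - q*v \<noteq> 0" "1 - q*u \<noteq> 0" "1 - u*v*q \<noteq> 0"
    using qpoch_nz_factor[OF qpoch_qq_nz[OF hq, of "Suc m"]] qpoch_nz_factor[OF qpoch_qq_nz[OF hq, of "Suc k"]] qn1
    by (auto simp: v_def u_def qn)
  have IH': "(\<Sum>j\<le>k. alu a q j / (qpoch q q (n - j) * qpoch (a*q) q (n + j)))
     = s*t*Y*(1-q*v)/(P*(Rm*(1-q*v))*S*(1-u*v*q))"
    using Suc.IH[OF less_imp_le[OF kn]] unfolding nk e1 e6 qn
      s_def[symmetric] t_def[symmetric] Y_def[symmetric] P_def[symmetric] S_def[symmetric] .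
  have new: "alu a q (Suc k) / (qpoch q q (n - Suc k) * qpoch (a*q) q (n + Suc k))
     = (1-a*q*q*u*u)*Y*(-s)*t/(P*(1-q*u)) / (Rm*(S*(1-a*q*q*u*u*v)))"
    unfolding al nk1 e2 Rm_def ..
  have "(\<Sum>j\<le>Suc k. alu a q j / (qpoch q q (n - j) * qpoch (a*q) q (n + j)))
     = s*t*Y*(1-q*v)/(P*(Rm*(1-q*v))*S*(1-u*v*q))
     + (1-a*q*q*u*u)*Y*(-s)*t/(P*(1-q*u)) / (Rm*(S*(1-a*q*q*u*u*v)))"
    unfolding sum.atMost_Suc IH' new ..
  also have "\<dots> = (-s)*(t*(q*u))*(Y*(1-a*q*u))*(1-v)/((P*(1-q*u))*Rm*(S*(1-a*q*q*u*u*v))*(1-u*v*q))"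
    by (rule unit_alg[OF nzP nzS(1) nzq(1,2) nzS(2) nzq(3)])
  also have "\<dots> = (-1)^Suc k * q^(Suc k*(Suc k+1) div 2) * qpoch (a*q) q (Suc k) * (1 - q^(n-Suc k))
       / (qpoch q q (Suc k) * qpoch q q (n-Suc k) * qpoch (a*q) q (n+Suc k) * (1 - q^n))"
    unfolding e5 e3 e4 nk1 e2 qn by (simp add: s_def Rm_def v_def)
  finally show ?case .
qed

lemma unit_bailey:
  fixes a q :: complex
  assumes hq: "norm q < 1" and a1: "a \<noteq> 1" and nza: "\<And>n. qpoch (a * q) q n \<noteq> 0"
  shows "bailey_pair a q (alu a q) beu"
  unfolding bailey_pair_def
proof (intro conjI allI impI)
  show "alu a q 0 = 1" using a1 by (simp add: alu_def)
  show "beu 0 = 1" by (simp add: beu_def)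
  fix n :: nat assume "n > 0"
  then have "(\<Sum>j\<le>n. alu a q j / (qpoch q q (n - j) * qpoch (a*q) q (n + j))) = 0"
    using unit_partial[OF hq a1 nza, of n n] by simp
  then show "beu n = (\<Sum>j\<le>n. alu a q j / (qpoch q q (n - j) * qpoch (a * q) q (n + j)))"
    using \<open>n > 0\<close> by (simp add: beu_def)
qed



lemma sqrt_ratio:
  fixes r q :: complex
  shows "qpoch (q*r) q m * qpoch (- q * r) q m * (1 - r^2) = (1 - r^2 * q^(2*m)) * qpoch r q m * qpoch (- r) q m"
proof (induction m)
  case 0 then show ?case by simp
next
  case (Suc m)
  have e: "q^(2 * Suc m) = q*q*q^m*q^m" unfolding mult_2 power_add by (simp add: mult_ac)
  have e2: "q^(2 * m) = q^m*q^m" unfolding mult_2 power_add ..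
  have "qpoch (q*r) q (Suc m) * qpoch (- q * r) q (Suc m) * (1 - r^2)
      = (qpoch (q*r) q m * qpoch (- q * r) q m * (1 - r^2)) * ((1 - q*r*q^m) * (1 - (-q*r)*q^m))"
    by (simp add: qpoch_Suc mult_ac)
  also have "\<dots> = (1 - r^2 * q^(2*m)) * qpoch r q m * qpoch (- r) q m * ((1 - q*r*q^m) * (1 - (-q*r)*q^m))"
    using Suc by simp
  also have "\<dots> = (1 - r^2 * q^(2*Suc m)) * (qpoch r q m * (1 - r*q^m)) * (qpoch (- r) q m * (1 - (-r)*q^m))"
    unfolding e e2 by (simp add: algebra_simps power2_eq_square)
  finally show ?case by (simp add: qpoch_Suc)
qed

lemma E1_alg:
  fixes A B C D Ap Mq W Qm Am sg Sm Pn Q2 a :: complex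
  assumes "C \<noteq> 0" "D \<noteq> 0" "Sm \<noteq> 0" "1 - Qm \<noteq> 0" "1 - a \<noteq> 0" "Pn \<noteq> 0"
    and r: "A*B*(1-a) = (1 - a*Q2)*C*D" "sg*sg = 1"
  shows "A*B*Ap*Mq*(Qm*W)*Am/(C*D*Sm*(1-Qm))
     = (Pn*Mq)*(sg*Qm*Am)/Sm*((1-a*Q2)*Ap*sg*W/((1-a)*(Pn*(1-Qm))))"
proof -
  have h: "C * inverse C = 1" "D * inverse D = 1" "Sm * inverse Sm = 1" "(1-Qm) * inverse (1-Qm) = 1"
    "(1-a) * inverse (1-a) = 1" "Pn * inverse Pn = 1" using assms(1-6) by auto
  show ?thesis unfolding divide_inverse inverse_mult_distrib using h r by algebra
qed

lemma E1_term:
  fixes a q :: complex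
  assumes hq: "norm q < 1" and a1: "a \<noteq> 1"
    and nzr: "\<And>n. qpoch (csqrt a) q n \<noteq> 0 \<and> qpoch (- csqrt a) q n \<noteq> 0"
    and nzs: "\<And>n. qpoch (q^2 * a^2) (q^2) n \<noteq> 0"
  shows "qpoch (q * csqrt a) q (Suc n) * qpoch (- q * csqrt a) q (Suc n) * qpoch a q (Suc n)
                     * qpoch (- q) q n * q ^ ((Suc n) * (Suc n + 1) div 2) * a ^ Suc n
                   / (qpoch (csqrt a) q (Suc n) * qpoch (- csqrt a) q (Suc n)
                      * qpoch (q^2 * a^2) (q^2) (Suc n) * (1 - q ^ Suc n))
     = qpoch (q^2) (q^2) n * (- q * a) ^ Suc n / qpoch (q^2 * a^2) (q^2) (Suc n) * alu a q (Suc n)"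
proof -
  define r where "r = csqrt a"
  have r2: "r^2 = a" by (simp add: r_def)
  have sr: "qpoch (q*r) q (Suc n) * qpoch (- q * r) q (Suc n) * (1 - a) = (1 - a * q^(2*Suc n)) * qpoch r q (Suc n) * qpoch (- r) q (Suc n)"
    using sqrt_ratio[of q r "Suc n"] unfolding r2 .
  have ex1: "q ^ ((Suc n) * (Suc n + 1) div 2) = q^Suc n * q^(n*(n+1) div 2)"
    unfolding tri_div power_add by (simp add: mult_ac)
  have ex2: "Suc n * (Suc n - 1) div 2 = n*(n+1) div 2" by (simp add: mult_ac)
  have pw: "(- q * a) ^ Suc n = (-1)^Suc n * q^Suc n * a^Suc n"
  proof -
    have "- q * a = (-1) * (q * a)" by simp
    then show ?thesis by (simp only: power_mult_distrib mult.assoc)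
  qed
  have sg: "((-1::complex)^Suc n) * (-1)^Suc n = 1" by (simp add: power_mult_distrib[symmetric])
  have qs: "qpoch (q^2) (q^2) n = qpoch q q n * qpoch (- q) q n" by (rule qpoch_sq)
  have qS: "qpoch q q (Suc n) = qpoch q q n * (1 - q^Suc n)" by (simp add: qpoch_Suc)
  have nz1: "1 - q^Suc n \<noteq> 0" using qpoch_nz_factor[OF qpoch_qq_nz[OF hq, of "Suc n"]] by simp
  show ?thesis unfolding r_def[symmetric] ex1 alu_def ex2 pw qs qS
    by (rule E1_alg[OF _ _ nzs _ _ qpoch_qq_nz[OF hq] sr sg])
       (use nzr nz1 a1 in \<open>auto simp: r_def\<close>)
qed



lemma unit_summable:
  fixes a q :: complex
  assumes hq: "norm q < 1" and hqa: "norm (q*a) < 1" and a1: "a \<noteq> 1"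
    and nzs: "\<And>n. qpoch (q^2 * a^2) (q^2) n \<noteq> 0"
  shows "summable (\<lambda>n. norm (qpoch (q^2) (q^2) n * (- q * a) ^ Suc n / qpoch (q^2 * a^2) (q^2) (Suc n) * alu a q (Suc n)))"
proof -
  have q2: "norm (q^2) < 1" using hq by (simp add: norm_power power_less_one_iff)
  obtain c1 where c1: "c1 > 0" "\<And>n. c1 \<le> norm (qpoch q q n)" using qpoch_norm_lower[OF hq qpoch_qq_nz[OF hq]] by blast
  obtain c3 where c3: "c3 > 0" "\<And>n. c3 \<le> norm (qpoch (q^2*a^2) (q^2) n)" using qpoch_norm_lower[OF q2 nzs] by blast
  define Ep where "Ep = exp (norm (q^2) / (1 - norm (q^2)))"
  define Ea where "Ea = exp (norm a / (1 - norm q))"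
  have Ep: "norm (qpoch (q^2) (q^2) n) \<le> Ep" for n unfolding Ep_def by (rule qpoch_norm_upper[OF q2])
  have Ea: "norm (qpoch a q n) \<le> Ea" for n unfolding Ea_def by (rule qpoch_norm_upper[OF hq])
  have na: "norm (1 - a) > 0" using a1 by simp
  define K where "K = Ep * (1 + norm a) * Ea / (c3 * (norm (1 - a) * c1))"
  have bnd: "norm (qpoch (q^2) (q^2) n * (- q * a) ^ Suc n / qpoch (q^2 * a^2) (q^2) (Suc n) * alu a q (Suc n))
      \<le> K * norm (q*a) ^ Suc n" for n
  proof -
    define m where "m = Suc n"
    have eqn: "norm (qpoch (q^2) (q^2) n * (- q * a) ^ m / qpoch (q^2 * a^2) (q^2) m * alu a q m)
      = (norm (qpoch (q^2) (q^2) n) * norm (q*a) ^ m * norm (1 - a*q^(2*m)) * norm (qpoch a q m) * norm q ^ (m*(m-1) div 2))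
        / (norm (qpoch (q^2 * a^2) (q^2) m) * (norm (1 - a) * norm (qpoch q q m)))"
      by (simp add: alu_def norm_mult norm_divide norm_power)
    have h1: "norm (1 - a*q^(2*m)) \<le> 1 + norm a"
    proof -
      have "norm (a*q^(2*m)) \<le> norm a" using hq by (simp add: norm_mult norm_power mult_left_le power_le_one)
      then show ?thesis by (smt (verit) norm_one norm_triangle_ineq4)
    qed
    have h2: "norm q ^ (m*(m-1) div 2) \<le> 1" using hq by (simp add: power_le_one)
    have num: "norm (qpoch (q^2) (q^2) n) * norm (q*a) ^ m * norm (1 - a*q^(2*m)) * norm (qpoch a q m) * norm q ^ (m*(m-1) div 2)
       \<le> Ep * norm (q*a) ^ m * (1 + norm a) * Ea * 1"
      by (intro mult_mono Ep Ea h1 h2) (auto simp: Ep_def Ea_def)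
    have den: "c3 * (norm (1 - a) * c1) \<le> norm (qpoch (q^2 * a^2) (q^2) m) * (norm (1 - a) * norm (qpoch q q m))"
      using c1 c3 na by (intro mult_mono) auto
    have "norm (qpoch (q^2) (q^2) n * (- q * a) ^ m / qpoch (q^2 * a^2) (q^2) m * alu a q m)
       \<le> Ep * norm (q*a) ^ m * (1 + norm a) * Ea * 1 / (c3 * (norm (1 - a) * c1))"
      unfolding eqn
    proof (rule frac_le[OF _ num _ den])
      show "0 \<le> Ep * norm (q*a) ^ m * (1 + norm a) * Ea * 1" by (simp add: Ep_def Ea_def)
      show "0 < c3 * (norm (1 - a) * c1)" using c1 c3 na by simp
    qed
    also have "\<dots> = K * norm (q*a) ^ m" by (simp add: K_def)
    finally show ?thesis unfolding m_def .
  qed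
  have g: "summable (\<lambda>n. K * norm (q*a) ^ Suc n)"
    using hqa by (intro summable_mult summable_Suc_iff[THEN iffD2] summable_geometric) simp
  show ?thesis by (rule summable_comparison_test[OF _ g]) (use bnd in simp)
qed

theorem corollary3p5:
  fixes a q :: complex and \<alpha> \<beta> :: "nat \<Rightarrow> complex"
  assumes hq: "norm q < 1"
    and hqa: "norm (q * a) < 1"
    and bp: "bailey_pair a q \<alpha> \<beta>"
    and nz_bailey: "\<forall>n. qpoch (a * q) q n \<noteq> 0"
    and nz_sqrt: "\<forall>n. qpoch (csqrt a) q n \<noteq> 0 \<and> qpoch (- csqrt a) q n \<noteq> 0"
    and nz_sq: "\<forall>n. qpoch (q\<^sup>2 * a\<^sup>2) (q\<^sup>2) n \<noteq> 0"
    and nz_last: "\<forall>n\<ge>1. 1 - a\<^sup>2 * q ^ (2 * n) \<noteq> 0"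
    and abs_beta: "summable (\<lambda>n. norm (qpoch (q\<^sup>2) (q\<^sup>2) n * (- q * a) ^ Suc n * \<beta> (Suc n)))"
    and abs_alpha: "summable (\<lambda>n. norm (qpoch (q\<^sup>2) (q\<^sup>2) n * (- q * a) ^ Suc n
                      / qpoch (q\<^sup>2 * a\<^sup>2) (q\<^sup>2) (Suc n) * \<alpha> (Suc n)))"
  shows
    "let L = (\<Sum>n. qpoch (q\<^sup>2) (q\<^sup>2) n * (- q * a) ^ Suc n * \<beta> (Suc n))
           - (\<Sum>n. qpoch (q\<^sup>2) (q\<^sup>2) n * (- q * a) ^ Suc n
                      / qpoch (q\<^sup>2 * a\<^sup>2) (q\<^sup>2) (Suc n) * \<alpha> (Suc n))
     in L = - (\<Sum>n. qpoch (q * csqrt a) q (Suc n) * qpoch (- q * csqrt a) q (Suc n) * qpoch a q (Suc n)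
                     * qpoch (- q) q n * q ^ ((Suc n) * (Suc n + 1) div 2) * a ^ Suc n
                   / (qpoch (csqrt a) q (Suc n) * qpoch (- csqrt a) q (Suc n)
                      * qpoch (q\<^sup>2 * a\<^sup>2) (q\<^sup>2) (Suc n) * (1 - q ^ Suc n)))
      \<and> L = (\<Sum>n. qpoch (- q) q n * (- q * a) ^ Suc n / (qpoch (q * a) q (Suc n) * (1 - q ^ Suc n)))
      \<and> L = - (\<Sum>n. a * q ^ Suc n / (1 - a\<^sup>2 * q ^ (2 * Suc n)))"
proof -
  have nza: "\<And>n. qpoch (a * q) q n \<noteq> 0" using nz_bailey by blast
  have nzs: "\<And>n. qpoch (q^2 * a^2) (q^2) n \<noteq> 0" using nz_sq by blast
  have nzr: "\<And>n. qpoch (csqrt a) q n \<noteq> 0 \<and> qpoch (- csqrt a) q n \<noteq> 0" using nz_sqrt by blast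
  have a1: "a \<noteq> 1"
  proof
    assume "a = 1"
    then have "qpoch (csqrt a) q 1 = 0" by (simp add: qpoch_def)
    then show False using nzr by blast
  qed
  define e2 where "e2 = (\<lambda>n. qpoch (- q) q n * (- q * a) ^ Suc n / (qpoch (q * a) q (Suc n) * (1 - q ^ Suc n)))"
  define L where "L = (\<Sum>n. qpoch (q\<^sup>2) (q\<^sup>2) n * (- q * a) ^ Suc n * \<beta> (Suc n))
           - (\<Sum>n. qpoch (q\<^sup>2) (q\<^sup>2) n * (- q * a) ^ Suc n
                      / qpoch (q\<^sup>2 * a\<^sup>2) (q\<^sup>2) (Suc n) * \<alpha> (Suc n))"
  have s1: "e2 sums L" unfolding e2_def L_def
    by (rule main_bailey[OF hq hqa bp nza nzs abs_beta abs_alpha])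
  have s2: "e2 sums ((\<Sum>n. qpoch (q\<^sup>2) (q\<^sup>2) n * (- q * a) ^ Suc n * beu (Suc n))
      - (\<Sum>n. qpoch (q\<^sup>2) (q\<^sup>2) n * (- q * a) ^ Suc n / qpoch (q\<^sup>2 * a\<^sup>2) (q\<^sup>2) (Suc n) * alu a q (Suc n)))"
    unfolding e2_def
    by (rule main_bailey[OF hq hqa unit_bailey[OF hq a1 nza] nza nzs _ unit_summable[OF hq hqa a1 nzs]])
       (simp add: beu_def)
  have E1: "(\<lambda>n. qpoch (q\<^sup>2) (q\<^sup>2) n * (- q * a) ^ Suc n / qpoch (q\<^sup>2 * a\<^sup>2) (q\<^sup>2) (Suc n) * alu a q (Suc n))
     = (\<lambda>n. qpoch (q * csqrt a) q (Suc n) * qpoch (- q * csqrt a) q (Suc n) * qpoch a q (Suc n)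
                     * qpoch (- q) q n * q ^ ((Suc n) * (Suc n + 1) div 2) * a ^ Suc n
                   / (qpoch (csqrt a) q (Suc n) * qpoch (- csqrt a) q (Suc n)
                      * qpoch (q\<^sup>2 * a\<^sup>2) (q\<^sup>2) (Suc n) * (1 - q ^ Suc n)))"
    using E1_term[OF hq a1 nzr nzs] by (intro ext) simp
  have c1: "L = - (\<Sum>n. qpoch (q * csqrt a) q (Suc n) * qpoch (- q * csqrt a) q (Suc n) * qpoch a q (Suc n)
                     * qpoch (- q) q n * q ^ ((Suc n) * (Suc n + 1) div 2) * a ^ Suc n
                   / (qpoch (csqrt a) q (Suc n) * qpoch (- csqrt a) q (Suc n)
                      * qpoch (q\<^sup>2 * a\<^sup>2) (q\<^sup>2) (Suc n) * (1 - q ^ Suc n)))"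
    using sums_unique2[OF s1 s2] unfolding E1[symmetric] by (simp add: beu_def)
  have c2: "L = (\<Sum>n. qpoch (- q) q n * (- q * a) ^ Suc n / (qpoch (q * a) q (Suc n) * (1 - q ^ Suc n)))"
    using sums_unique[OF s1] unfolding e2_def by simp
  have c3: "L = - (\<Sum>n. a * q ^ Suc n / (1 - a\<^sup>2 * q ^ (2 * Suc n)))"
  proof -
    have "suminf (e2f q a) = - suminf (hf q a)" by (rule third_expr[OF hq hqa nza nzs])
    moreover have "e2f q a = e2" by (simp add: e2f_def e2_def fun_eq_iff)
    moreover have "hf q a = (\<lambda>n. a * q ^ Suc n / (1 - a\<^sup>2 * q ^ (2 * Suc n)))" by (simp add: hf_def fun_eq_iff)
    ultimately show ?thesis using sums_unique[OF s1] by simp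
  qed
  show ?thesis unfolding Let_def L_def[symmetric] using c1 c2 c3 by blast
qed


end
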